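(* Assume in addition that $\rho(x,y)=0$ if and only if $x=y$. Let $X_1,X_2,\dots$ be i.i.d. with distribution $P$ (with joint law $\mathbb P=P^{\mathbb N}$). For any $D\geq0$ and any $\epsilon>0$ there exists a sequence of sets $C_n\subset A^n$, $n\ge1$, such that (i) $\frac1n\log M^n(C_n)\leq R(D)+\epsilon$ for all $n\geq1$; and (ii) $\mathbb P$-almost surely, $\rho_n(X_1^n,C_n)\leq D$ for all sufficiently large $n$.
   Context: Setting: $A$ is a finite set; $P$ is a probability mass function on $A$ with $P(a)>0$ for all $a\in A$; $\rho:A\times A\to[0,\infty)$; $M:A\to(0,\infty)$ is an arbitrary positive "mass" function. For $n\geq1$ and $x_1^n,y_1^n\in A^n$, $\rho_n(x_1^n,y_1^n)=\frac1n\sum_{i=1}^n\rho(x_i,y_i)$; $M^n(y_1^n)=\prod_{i=1}^n M(y_i)$ and $M^n(C)=\sum_{y_1^n\in C}M^n(y_1^n)$. For $C\subset A^n$, $\rho_n(x_1^n,C)=\min_{y_1^n\in C}\rho_n(x_1^n,y_1^n)$. Logarithms are natural. $H(\mu\|\nu)=\sum_s\mu(s)\log\frac{\mu(s)}{\nu(s)}$ is relative entropy. For a probability measure $Q$ on $A$ and $D\geq0$, ${\cal M}(P,Q,D)$ is the set of probability measures $W$ on $A\times A$ with first marginal $P$, second marginal $Q$, and $E_W[\rho(X,Y)]\leq D$; $I(P,Q,D)=\inf_{W\in{\cal M}(P,Q,D)}H(W\|P\times Q)$ ($+\infty$ if empty). $R(D)=R(D;P,M)=\inf_Q\{I(P,Q,D)+E_Q[\log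 M(Y)]\}$ over all probability distributions $Q$ on $A$. *)

theory Defs
  imports "HOL-Probability.Probability"
begin

text \<open>The finite alphabet A is the finite type 'a; elements of A^n are lists of length n.\<close>

definition rho_n :: "('a \<Rightarrow> 'a \<Rightarrow> real) \<Rightarrow> 'a list \<Rightarrow> 'a list \<Rightarrow> real" where
  "rho_n \<rho> xs ys = (\<Sum>i<length xs. \<rho> (xs ! i) (ys ! i)) / real (length xs)"

definition Mn :: "('a \<Rightarrow> real) \<Rightarrow> 'a list \<Rightarrow> real" where
  "Mn M ys = prod_list (map M ys)"

definition Mn_set :: "('a \<Rightarrow> real) \<Rightarrow> 'a list set \<Rightarrow> real" where
  "Mn_set M C = (\<Sum>ys\<in>C. Mn M ys)"

definition rel_ent :: "('b::finite) pmf \<Rightarrow> 'b pmf \<Rightarrow> ereal" where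
  "rel_ent \<mu> \<nu> =
     (if \<exists>s. pmf \<mu> s > 0 \<and> pmf \<nu> s = 0 then \<infinity>
      else ereal (\<Sum>s\<in>UNIV. if pmf \<mu> s = 0 then 0
                   else pmf \<mu> s * ln (pmf \<mu> s / pmf \<nu> s)))"

definition couplings :: "'a pmf \<Rightarrow> 'a pmf \<Rightarrow> ('a \<Rightarrow> 'a \<Rightarrow> real) \<Rightarrow> real \<Rightarrow> ('a \<times> 'a) pmf set" where
  "couplings P Q \<rho> D = {W. map_pmf fst W = P \<and> map_pmf snd W = Q \<and>
       measure_pmf.expectation W (\<lambda>(x, y). \<rho> x y) \<le> D}"

definition I_PQD :: "('a::finite) pmf \<Rightarrow> 'a pmf \<Rightarrow> ('a \<Rightarrow> 'a \<Rightarrow> real) \<Rightarrow> real \<Rightarrow> ereal" where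
  "I_PQD P Q \<rho> D = (INF W\<in>couplings P Q \<rho> D. rel_ent W (pair_pmf P Q))"

definition R_fun :: "('a::finite) pmf \<Rightarrow> ('a \<Rightarrow> real) \<Rightarrow> ('a \<Rightarrow> 'a \<Rightarrow> real) \<Rightarrow> real \<Rightarrow> ereal" where
  "R_fun P M \<rho> D = (INF Q\<in>(UNIV :: 'a pmf set).
      I_PQD P Q \<rho> D + ereal (measure_pmf.expectation Q (\<lambda>y. ln (M y))))"

end

theory Submission
  imports Defs "HOL-Probability.Probability"
begin

lemma lists_len_Suc:
  "{ys. length ys = Suc n \<and> set ys \<subseteq> S} = (\<lambda>(a,ys). a#ys) ` (S \<times> {ys. length ys = n \<and> set ys \<subseteq> S})"
  by (auto simp: length_Suc_conv image_iff)

lemma sum_lists_prod: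
  fixes f :: "nat \<Rightarrow> 'a \<Rightarrow> real"
  assumes "finite S"
  shows "(\<Sum>ys\<in>{ys. length ys = n \<and> set ys \<subseteq> S}. \<Prod>i<n. f i (ys!i)) = (\<Prod>i<n. \<Sum>a\<in>S. f i a)"
proof (induction n arbitrary: f)
  case 0
  have "{ys. length ys = 0 \<and> set ys \<subseteq> S} = {[]}" by auto
  then show ?case by simp
next
  case (Suc n)
  have inj: "inj_on (\<lambda>(a,ys). a#ys) (S \<times> {ys. length ys = n \<and> set ys \<subseteq> S})"
    by (auto simp: inj_on_def)
  have "(\<Sum>ys\<in>{ys. length ys = Suc n \<and> set ys \<subseteq> S}. \<Prod>i<Suc n. f i (ys!i))
      = (\<Sum>(a,ys)\<in>S \<times> {ys. length ys = n \<and> set ys \<subseteq> S}. \<Prod>i<Suc n. f i ((a#ys)!i))"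
    unfolding lists_len_Suc by (subst sum.reindex[OF inj]) (simp add: case_prod_unfold)
  also have "\<dots> = (\<Sum>(a,ys)\<in>S \<times> {ys. length ys = n \<and> set ys \<subseteq> S}. f 0 a * (\<Prod>i<n. f (Suc i) (ys!i)))"
    by (simp add: prod.lessThan_Suc_shift del: prod.lessThan_Suc)
  also have "\<dots> = (\<Sum>a\<in>S. f 0 a) * (\<Sum>ys\<in>{ys. length ys = n \<and> set ys \<subseteq> S}. \<Prod>i<n. f (Suc i) (ys!i))"
    by (simp add: sum.cartesian_product[symmetric] sum_product)
  also have "\<dots> = (\<Sum>a\<in>S. f 0 a) * (\<Prod>i<n. \<Sum>a\<in>S. f (Suc i) a)"
    using Suc[of "\<lambda>i. f (Suc i)"] by simp
  also have "\<dots> = (\<Prod>i<Suc n. \<Sum>a\<in>S. f i a)"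
    by (simp add: prod.lessThan_Suc_shift del: prod.lessThan_Suc)
  finally show ?case .
qed

lemma sum_lists_prod_UNIV:
  fixes f :: "nat \<Rightarrow> 'a::finite \<Rightarrow> real"
  shows   "(\<Sum>ys\<in>{ys. length ys = n}. \<Prod>i<n. f i (ys!i)) = (\<Prod>i<n. \<Sum>a\<in>(UNIV::'a::finite set). f i a)"
  using sum_lists_prod[where S="UNIV::'a set" and n=n and f=f] by simp

lemma exp_quad_bound:
  fixes u :: real assumes "\<bar>u\<bar> \<le> 1" shows "exp u \<le> 1 + u + u^2"
proof (cases "u \<ge> 0")
  case True thus ?thesis using exp_bound[of u] assms by simp
next
  case False
  have "1 - u \<le> exp (-u)" using exp_ge_add_one_self[of "-u"] by simp
  hence "exp u \<le> 1 / (1 - u)" using False by (simp add: exp_minus field_simps)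
  also have "\<dots> \<le> 1 + u + u^2"
  proof -
    have "(1 + u + u^2) * (1 - u) = 1 - u^3" by (simp add: algebra_simps power2_eq_square power3_eq_cube)
    moreover have "u^3 \<le> 0"
    proof -
      have "u*u \<ge> 0" by simp
      hence "(u*u)*u \<le> 0" using False by (simp add: mult_nonneg_nonpos)
      thus ?thesis by (simp add: power3_eq_cube)
    qed
    ultimately have "1 \<le> (1 + u + u^2) * (1 - u)" by simp
    thus ?thesis using False by (simp add: field_simps)
  qed
  finally show ?thesis .
qed

lemma chernoff:
  fixes p g :: "nat \<Rightarrow> 'a::finite \<Rightarrow> real" and B \<delta> :: real
  assumes p_nn: "\<And>i a. p i a \<ge> 0" and p_sum: "\<And>i. (\<Sum>a\<in>UNIV. p i a) = 1"
    and gB: "\<And>i a. \<bar>g i a\<bar> \<le> B" and dpos: "0 < \<delta>" and dB: "\<delta> \<le> B"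
  shows "(\<Sum>ys\<in>{ys. length ys = n}. if (\<Sum>i<n. g i (ys!i)) \<ge> (\<Sum>i<n. \<Sum>a\<in>UNIV. p i a * g i a) + real n * \<delta>
            then (\<Prod>i<n. p i (ys!i)) else 0) \<le> exp (-(real n * \<delta>^2 / (16 * B^2)))"
proof -
  define m where "m i = (\<Sum>a\<in>UNIV. p i a * g i a)" for i
  define t where "t = \<delta> / (8 * B^2)"
  have Bpos: "B > 0" using dpos dB by simp
  have tpos: "t > 0" unfolding t_def using dpos Bpos by simp
  have mB: "\<bar>m i\<bar> \<le> B" for i
  proof -
    have "\<bar>m i\<bar> \<le> (\<Sum>a\<in>UNIV. \<bar>p i a * g i a\<bar>)" unfolding m_def by (rule sum_abs)
    also have "\<dots> \<le> (\<Sum>a\<in>UNIV. p i a * B)"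
      by (intro sum_mono) (simp add: abs_mult p_nn gB mult_left_mono)
    also have "\<dots> = B" using p_sum[of i] by (simp add: sum_distrib_right[symmetric])
    finally show ?thesis .
  qed
  have tB: "t * (2*B) \<le> 1"
  proof -
    have "t * (2*B) = \<delta> / (4*B)" unfolding t_def using Bpos by (simp add: power2_eq_square field_simps)
    also have "\<dots> \<le> 1" using dB Bpos by simp
    finally show ?thesis .
  qed
  define F where "F i a = p i a * exp (t * (g i a - m i))" for i a
  have step1: "(if (\<Sum>i<n. g i (ys!i)) \<ge> (\<Sum>i<n. m i) + real n * \<delta> then (\<Prod>i<n. p i (ys!i)) else 0)
      \<le> (\<Prod>i<n. F i (ys!i)) * exp (-(t * real n * \<delta>))" for ys
  proof -
    have eq: "(\<Prod>i<n. F i (ys!i)) * exp (-(t * real n * \<delta>))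
        = (\<Prod>i<n. p i (ys!i)) * exp (t * ((\<Sum>i<n. g i (ys!i)) - (\<Sum>i<n. m i) - real n * \<delta>))"
    proof -
      have "(\<Prod>i<n. F i (ys!i)) = (\<Prod>i<n. p i (ys!i)) * (\<Prod>i<n. exp (t * (g i (ys!i) - m i)))"
        unfolding F_def by (rule prod.distrib)
      also have "(\<Prod>i<n. exp (t * (g i (ys!i) - m i))) = exp (\<Sum>i<n. t * (g i (ys!i) - m i))"
        by (simp add: exp_sum)
      also have "(\<Sum>i<n. t * (g i (ys!i) - m i)) = t * ((\<Sum>i<n. g i (ys!i)) - (\<Sum>i<n. m i))"
        by (simp add: sum_distrib_left[symmetric] sum_subtractf)
      finally show ?thesis by (simp add: mult.assoc exp_add[symmetric] algebra_simps)
    qed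
    have pp: "(\<Prod>i<n. p i (ys!i)) \<ge> 0" by (simp add: prod_nonneg p_nn)
    show ?thesis
    proof (cases "(\<Sum>i<n. g i (ys!i)) \<ge> (\<Sum>i<n. m i) + real n * \<delta>")
      case True
      hence "t * ((\<Sum>i<n. g i (ys!i)) - (\<Sum>i<n. m i) - real n * \<delta>) \<ge> 0" using tpos by simp
      hence "exp (t * ((\<Sum>i<n. g i (ys!i)) - (\<Sum>i<n. m i) - real n * \<delta>)) \<ge> 1" by simp
      hence "(\<Prod>i<n. p i (ys!i)) \<le> (\<Prod>i<n. p i (ys!i)) * exp (t * ((\<Sum>i<n. g i (ys!i)) - (\<Sum>i<n. m i) - real n * \<delta>))"
        using pp by (simp add: mult_le_cancel_left1)
      then show ?thesis using True eq by simp
    next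
      case False
      then show ?thesis using eq pp by simp
    qed
  qed
  have factor: "(\<Sum>a\<in>UNIV. F i a) \<le> exp (4 * t^2 * B^2)" for i
  proof -
    have "(\<Sum>a\<in>UNIV. F i a) \<le> (\<Sum>a\<in>UNIV. p i a * (1 + t * (g i a - m i) + (t * (g i a - m i))^2))"
    proof (intro sum_mono)
      fix a
      have "\<bar>t * (g i a - m i)\<bar> \<le> t * (2*B)"
      proof -
        have "\<bar>g i a - m i\<bar> \<le> 2*B" using gB[of i a] mB[of i] by simp
        thus ?thesis using tpos by (simp add: abs_mult)
      qed
      hence "exp (t * (g i a - m i)) \<le> 1 + t * (g i a - m i) + (t * (g i a - m i))^2"
        using tB by (intro exp_quad_bound) simp
      thus "F i a \<le> p i a * (1 + t * (g i a - m i) + (t * (g i a - m i))^2)"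
        unfolding F_def by (simp add: mult_left_mono p_nn)
    qed
    also have "\<dots> = (\<Sum>a\<in>UNIV. p i a) + t * ((\<Sum>a\<in>UNIV. p i a * g i a) - m i * (\<Sum>a\<in>UNIV. p i a))
         + (\<Sum>a\<in>UNIV. p i a * (t * (g i a - m i))^2)"
      by (simp add: algebra_simps sum.distrib sum_subtractf sum_distrib_left sum_distrib_right)
    also have "\<dots> = 1 + (\<Sum>a\<in>UNIV. p i a * (t * (g i a - m i))^2)"
      using p_sum[of i] by (simp add: m_def)
    also have "(\<Sum>a\<in>UNIV. p i a * (t * (g i a - m i))^2) \<le> (\<Sum>a\<in>UNIV. p i a * (t * (2*B))^2)"
    proof (intro sum_mono mult_left_mono p_nn)
      fix a
      have "\<bar>t * (g i a - m i)\<bar> \<le> t * (2*B)"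
      proof -
        have "\<bar>g i a - m i\<bar> \<le> 2*B" using gB[of i a] mB[of i] by simp
        thus ?thesis using tpos by (simp add: abs_mult)
      qed
      hence "\<bar>t * (g i a - m i)\<bar>^2 \<le> (t * (2*B))^2"
        by (intro power_mono) simp_all
      thus "(t * (g i a - m i))^2 \<le> (t * (2*B))^2" by simp
    qed
    also have "\<dots> = 4 * t^2 * B^2" using p_sum[of i] by (simp add: sum_distrib_right[symmetric] power_mult_distrib)
    finally have "(\<Sum>a\<in>UNIV. F i a) \<le> 1 + 4 * t^2 * B^2" by simp
    also have "\<dots> \<le> exp (4 * t^2 * B^2)" by (rule exp_ge_add_one_self)
    finally show ?thesis .
  qed
  have Fnn: "F i a \<ge> 0" for i a unfolding F_def by (simp add: p_nn)
  have "(\<Sum>ys\<in>{ys. length ys = n}. if (\<Sum>i<n. g i (ys!i)) \<ge> (\<Sum>i<n. m i) + real n * \<delta> then (\<Prod>i<n. p i (ys!i)) else 0)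
      \<le> (\<Sum>ys\<in>{ys. length ys = n}. (\<Prod>i<n. F i (ys!i)) * exp (-(t * real n * \<delta>)))"
    by (intro sum_mono step1)
  also have "\<dots> = (\<Prod>i<n. \<Sum>a\<in>UNIV. F i a) * exp (-(t * real n * \<delta>))"
    by (simp add: sum_distrib_right[symmetric] sum_lists_prod_UNIV)
  also have "\<dots> \<le> (\<Prod>i<n. exp (4 * t^2 * B^2)) * exp (-(t * real n * \<delta>))"
    by (intro mult_right_mono prod_mono) (auto intro: factor sum_nonneg Fnn)
  also have "\<dots> = exp (real n * (4 * t^2 * B^2) - t * real n * \<delta>)"
    by (simp add: exp_of_nat_mult[symmetric] exp_diff exp_minus field_simps)
  also have "real n * (4 * t^2 * B^2) - t * real n * \<delta> = -(real n * \<delta>^2 / (16 * B^2))"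
    unfolding t_def using Bpos by (simp add: field_simps power2_eq_square)
  finally show ?thesis unfolding m_def .
qed

lemma map_upt_eq_iff:
  assumes "length x = n"
  shows "map \<omega> [0..<n] = x \<longleftrightarrow> (\<forall>i<n. \<omega> i = x!i)"
  using assms by (auto simp: list_eq_iff_nth_eq)

lemma bridge_set:
  fixes P :: "'a pmf" and x :: "'a list"
  assumes "length x = n"
  shows "{\<omega>. map \<omega> [0..<n] = x} = prod_emb UNIV (\<lambda>_::nat. measure_pmf P) {..<n} (PiE {..<n} (\<lambda>i. {x!i}))"
  using assms by (auto simp: prod_emb_def PiE_iff space_PiM map_upt_eq_iff)

lemma bridge:
  fixes P :: "('a::finite) pmf" and S :: "'a list set"
  assumes S: "S \<subseteq> {x. length x = n}"
  shows "{\<omega>. map \<omega> [0..<n] \<in> S} \<in> sets (PiM UNIV (\<lambda>_::nat. measure_pmf P))"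
    and "measure (PiM UNIV (\<lambda>_::nat. measure_pmf P)) {\<omega>. map \<omega> [0..<n] \<in> S} = (\<Sum>x\<in>S. \<Prod>i<n. pmf P (x!i))"
proof -
  let ?M = "PiM UNIV (\<lambda>_::nat. measure_pmf P)"
  let ?E = "\<lambda>x. prod_emb UNIV (\<lambda>_::nat. measure_pmf P) {..<n} (PiE {..<n} (\<lambda>i. {x!i}))"
  have fin: "finite S" using S finite_lists_length_eq[of "UNIV::'a set" n] by (auto intro: finite_subset)
  have Ex: "?E x = {\<omega>. map \<omega> [0..<n] = x}" if "x \<in> S" for x
    using S that bridge_set[of x n P] by auto
  have "(\<Union>x\<in>S. ?E x) = (\<Union>x\<in>S. {\<omega>. map \<omega> [0..<n] = x})"
    by (rule SUP_cong) (simp_all add: Ex)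
  hence eq: "{\<omega>. map \<omega> [0..<n] \<in> S} = (\<Union>x\<in>S. ?E x)" by auto
  have Es: "?E x \<in> sets ?M" for x
    by (rule sets_PiM_I) auto
  show "{\<omega>. map \<omega> [0..<n] \<in> S} \<in> sets ?M"
    unfolding eq using fin Es by auto
  have disj: "disjoint_family_on ?E S"
    unfolding disjoint_family_on_def
  proof (intro ballI impI)
    fix x y assume "x \<in> S" "y \<in> S" "x \<noteq> y"
    thus "?E x \<inter> ?E y = {}"
      using Ex by auto
  qed
  have em1: "emeasure ?M (?E x) = ennreal (\<Prod>i<n. pmf P (x!i))" for x
  proof -
    have "emeasure ?M (?E x) = (\<Prod>i<n. emeasure (measure_pmf P) {x!i})"
      by (rule emeasure_PiM_emb) (auto simp: prob_space_measure_pmf)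
    also have "\<dots> = ennreal (\<Prod>i<n. pmf P (x!i))"
      by (simp add: emeasure_pmf_single prod_ennreal)
    finally show ?thesis .
  qed
  have meas1: "measure ?M (?E x) = (\<Prod>i<n. pmf P (x!i))" for x
    by (simp add: measure_def em1 prod_nonneg)
  have "measure ?M (\<Union>x\<in>S. ?E x) = (\<Sum>x\<in>S. measure ?M (?E x))"
    by (rule measure_finite_Union) (use fin Es disj em1 in auto)
  then show "measure ?M {\<omega>. map \<omega> [0..<n] \<in> S} = (\<Sum>x\<in>S. \<Prod>i<n. pmf P (x!i))"
    unfolding eq meas1 by simp
qed

lemma xlnx_ge: fixes a b :: real assumes "a \<ge> 0" "b \<ge> 0" "a > 0 \<Longrightarrow> b > 0"
  shows "a * ln (a / b) \<ge> a - b"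
proof (cases "a = 0")
  case True thus ?thesis using assms by simp
next
  case False
  hence a: "a > 0" using assms by simp
  hence b: "b > 0" using assms by simp
  have "ln (b / a) \<le> b / a - 1" using a b by (intro ln_le_minus_one) simp
  hence "a * ln (b / a) \<le> a * (b / a - 1)" using a by (simp add: mult_left_mono)
  also have "\<dots> = b - a" using a by (simp add: field_simps)
  finally have "a * ln (b / a) \<le> b - a" .
  moreover have "ln (a / b) = - ln (b / a)" using a b by (simp add: ln_div)
  ultimately show ?thesis by simp
qed

lemma gibbs:
  fixes \<mu> \<nu> :: "'b \<Rightarrow> real"
  assumes "finite S" "\<And>s. \<mu> s \<ge> 0" "\<And>s. \<nu> s \<ge> 0" "\<And>s. \<mu> s > 0 \<Longrightarrow> \<nu> s > 0"
    and "(\<Sum>s\<in>S. \<mu> s) = 1" "(\<Sum>s\<in>S. \<nu> s) \<le> 1"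
  shows "(\<Sum>s\<in>S. \<mu> s * ln (\<mu> s / \<nu> s)) \<ge> 0"
proof -
  have "(\<Sum>s\<in>S. \<mu> s * ln (\<mu> s / \<nu> s)) \<ge> (\<Sum>s\<in>S. \<mu> s - \<nu> s)"
    by (intro sum_mono xlnx_ge) (use assms in auto)
  moreover have "(\<Sum>s\<in>S. \<mu> s - \<nu> s) \<ge> 0" using assms by (simp add: sum_subtractf)
  ultimately show ?thesis by linarith
qed

lemma log_sum2:
  fixes a1 a2 b1 b2 :: real
  assumes "a1 \<ge> 0" "a2 \<ge> 0" "b1 \<ge> 0" "b2 \<ge> 0" "a1 > 0 \<Longrightarrow> b1 > 0" "a2 > 0 \<Longrightarrow> b2 > 0"
  shows "(a1 + a2) * ln ((a1 + a2) / (b1 + b2)) \<le> a1 * ln (a1 / b1) + a2 * ln (a2 / b2)"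
proof -
  consider "a1 = 0" | "a2 = 0" | "a1 > 0 \<and> a2 > 0" using assms by linarith
  then show ?thesis
  proof cases
    case 1
    show ?thesis
    proof (cases "a2 = 0")
      case True thus ?thesis using 1 by simp
    next
      case False
      hence a2: "a2 > 0" and b2: "b2 > 0" using assms by auto
      have "a2 / (b1 + b2) \<le> a2 / b2" using a2 b2 assms(3) by (intro divide_left_mono) auto
      hence "ln (a2 / (b1 + b2)) \<le> ln (a2 / b2)" using a2 b2 assms(3) by (intro ln_mono) auto
      thus ?thesis using 1 a2 by (simp add: mult_left_mono)
    qed
  next
    case 2
    show ?thesis
    proof (cases "a1 = 0")
      case True thus ?thesis using 2 by simp
    next
      case False
      hence a1: "a1 > 0" and b1: "b1 > 0" using assms by auto
      have "a1 / (b1 + b2) \<le> a1 / b1" using a1 b1 assms(4) by (intro divide_left_mono) auto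
      hence "ln (a1 / (b1 + b2)) \<le> ln (a1 / b1)" using a1 b1 assms(4) by (intro ln_mono) auto
      thus ?thesis using 2 a1 by (simp add: mult_left_mono)
    qed
  next
    case 3
    hence a1: "a1 > 0" and a2: "a2 > 0" and b1: "b1 > 0" and b2: "b2 > 0" using assms by auto
    define a b where "a = a1 + a2" and "b = b1 + b2"
    have a: "a > 0" and b: "b > 0" using a1 a2 b1 b2 by (auto simp: a_def b_def)
    have k1: "a1 * ln ((a1 * b) / (b1 * a)) \<ge> a1 - b1 * a / b"
    proof -
      have "a1 * ln ((a1 * b) / (b1 * a)) \<ge> a1 - b1 * a / b"
        using xlnx_ge[of a1 "b1 * a / b"] a1 b1 a b by (simp add: field_simps)
      thus ?thesis .
    qed
    have k2: "a2 * ln ((a2 * b) / (b2 * a)) \<ge> a2 - b2 * a / b"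
      using xlnx_ge[of a2 "b2 * a / b"] a2 b2 a b by (simp add: field_simps)
    have l1: "ln ((a1 * b) / (b1 * a)) = ln (a1 / b1) - ln (a / b)"
      using a1 b1 a b by (simp add: ln_div ln_mult)
    have l2: "ln ((a2 * b) / (b2 * a)) = ln (a2 / b2) - ln (a / b)"
      using a2 b2 a b by (simp add: ln_div ln_mult)
    have s: "a1 - b1 * a / b + (a2 - b2 * a / b) = 0"
      using b by (simp add: a_def b_def field_simps)
    have e1: "a1 * ln (a1 / b1) = a1 * ln ((a1 * b) / (b1 * a)) + a1 * ln (a / b)"
      unfolding l1 by (simp add: algebra_simps)
    have e2: "a2 * ln (a2 / b2) = a2 * ln ((a2 * b) / (b2 * a)) + a2 * ln (a / b)"
      unfolding l2 by (simp add: algebra_simps)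
    have e3: "a * ln (a / b) = a1 * ln (a / b) + a2 * ln (a / b)"
      unfolding a_def by (simp add: distrib_right)
    have "a * ln (a / b) \<le> a1 * ln (a1 / b1) + a2 * ln (a2 / b2)"
      using k1 k2 s e1 e2 e3 by linarith
    thus ?thesis unfolding a_def b_def .
  qed
qed

locale coding =
  fixes P :: "('a::finite) pmf" and w :: "'a \<Rightarrow> 'a \<Rightarrow> real" and \<rho> :: "'a \<Rightarrow> 'a \<Rightarrow> real"
    and M :: "'a \<Rightarrow> real" and D \<delta> :: real
  assumes P_pos: "\<And>a. pmf P a > 0"
    and w_nn: "\<And>a b. w a b \<ge> 0"
    and w_marg: "\<And>a. (\<Sum>b\<in>UNIV. w a b) = pmf P a"
    and q_pos: "\<And>b. (\<Sum>a\<in>UNIV. w a b) > 0"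
    and M_pos: "\<And>a. M a > 0"
    and rho_nn: "\<And>a b. \<rho> a b \<ge> 0"
    and D_nn: "D \<ge> 0"
    and rho_cond: "(\<Sum>a\<in>UNIV. \<Sum>b\<in>UNIV. w a b * \<rho> a b) + 2 * \<delta> \<le> D \<or> (\<forall>a b. w a b > 0 \<longrightarrow> \<rho> a b = 0)"
    and d_pos: "0 < \<delta>" and d_le1: "\<delta> \<le> 1"
begin

definition "p a = pmf P a"
definition "q b = (\<Sum>a\<in>UNIV. w a b)"
definition "V a b = w a b / p a"
definition "g1 a b = ln (w a b / (p a * q b))"
definition "g3 (a::'a) b = ln (M b)"
definition "GG g = (\<Sum>a\<in>UNIV. \<Sum>b\<in>UNIV. w a b * g a b)"
definition "B = 1 + (\<Sum>a\<in>UNIV. \<Sum>b\<in>UNIV. \<bar>g1 a b\<bar> + \<bar>\<rho> a b\<bar> + \<bar>g3 a b\<bar>)"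
definition "h g a = (\<Sum>b\<in>UNIV. V a b * g a b)"
definition "cc = \<delta>^2 / (16 * B^2)"
definition "typ x = ((\<Sum>i<length x. h g1 (x!i)) < real (length x) * (GG g1 + \<delta>) \<and>
                    (\<Sum>i<length x. h \<rho> (x!i)) < real (length x) * (GG \<rho> + \<delta>) \<and>
                    (\<Sum>i<length x. h g3 (x!i)) < real (length x) * (GG g3 + \<delta>))"
definition "J x y = ((\<Sum>i<length x. g1 (x!i) (y!i)) \<le> real (length x) * (GG g1 + 2*\<delta>) \<and>
                    (\<Sum>i<length x. \<rho> (x!i) (y!i)) \<le> real (length x) * D \<and>
                    (\<Sum>i<length x. g3 (x!i) (y!i)) \<le> real (length x) * (GG g3 + 2*\<delta>))"
definition "Pn n x = (\<Prod>i<n. p (x!i))"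
definition "Qn n y = (\<Prod>i<n. q (y!i))"
definition "Vn n x y = (\<Prod>i<n. V (x!i) (y!i))"

lemma p_pos: "p a > 0" unfolding p_def by (rule P_pos)
lemma p_sum: "(\<Sum>a\<in>UNIV. p a) = 1" unfolding p_def by (simp add: sum_pmf_eq_1)
lemma q_pos': "q b > 0" unfolding q_def by (rule q_pos)
lemma q_sum: "(\<Sum>b\<in>UNIV. q b) = 1"
  unfolding q_def using p_sum w_marg by (simp add: sum.swap[of _ UNIV UNIV] p_def)
lemma V_nn: "V a b \<ge> 0" unfolding V_def using w_nn p_pos by (simp add: less_imp_le)
lemma V_sum: "(\<Sum>b\<in>UNIV. V a b) = 1"
  unfolding V_def using w_marg[of a] p_pos[of a] by (simp add: sum_divide_distrib[symmetric] p_def)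

lemma B_ge1: "B \<ge> 1"
  unfolding B_def by (simp add: sum_nonneg)

lemma bound_aux: "\<bar>g1 a b\<bar> + \<bar>\<rho> a b\<bar> + \<bar>g3 a b\<bar> \<le> B - 1"
proof -
  have "\<bar>g1 a b\<bar> + \<bar>\<rho> a b\<bar> + \<bar>g3 a b\<bar> \<le> (\<Sum>b\<in>UNIV. \<bar>g1 a b\<bar> + \<bar>\<rho> a b\<bar> + \<bar>g3 a b\<bar>)"
    by (rule member_le_sum) auto
  also have "\<dots> \<le> (\<Sum>a\<in>UNIV. \<Sum>b\<in>UNIV. \<bar>g1 a b\<bar> + \<bar>\<rho> a b\<bar> + \<bar>g3 a b\<bar>)"
    by (rule member_le_sum) (auto intro: sum_nonneg)
  finally show ?thesis unfolding B_def by simp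
qed

lemma g1_B: "\<bar>g1 a b\<bar> \<le> B" using bound_aux[of a b] by simp
lemma rho_B: "\<bar>\<rho> a b\<bar> \<le> B" using bound_aux[of a b] by simp
lemma g3_B: "\<bar>g3 a b\<bar> \<le> B" using bound_aux[of a b] by simp

lemma h_B: assumes "\<And>a b. \<bar>g a b\<bar> \<le> B" shows "\<bar>h g a\<bar> \<le> B"
proof -
  have "\<bar>h g a\<bar> \<le> (\<Sum>b\<in>UNIV. \<bar>V a b * g a b\<bar>)" unfolding h_def by (rule sum_abs)
  also have "\<dots> \<le> (\<Sum>b\<in>UNIV. V a b * B)"
    by (intro sum_mono) (simp add: abs_mult V_nn assms mult_left_mono)
  also have "\<dots> = B" using V_sum[of a] by (simp add: sum_distrib_right[symmetric])
  finally show ?thesis .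
qed

lemma h_mean: "(\<Sum>a\<in>UNIV. p a * h g a) = GG g"
proof -
  have "p a * h g a = (\<Sum>b\<in>UNIV. w a b * g a b)" for a
    unfolding h_def V_def using p_pos[of a] by (simp add: sum_distrib_left)
  thus ?thesis unfolding GG_def by simp
qed

lemma Pn_sum: "(\<Sum>x\<in>{x. length x = n}. Pn n x) = 1"
  unfolding Pn_def using sum_lists_prod_UNIV[where f="\<lambda>i. p" and n=n] by (simp add: p_sum)
lemma Qn_sum: "(\<Sum>x\<in>{x. length x = n}. Qn n x) = 1"
  unfolding Qn_def using sum_lists_prod_UNIV[where f="\<lambda>i. q" and n=n] by (simp add: q_sum)
lemma Vn_sum: "(\<Sum>y\<in>{y. length y = n}. Vn n x y) = 1"
  unfolding Vn_def using sum_lists_prod_UNIV[where f="\<lambda>i b. V (x!i) b" and n=n] by (simp add: V_sum)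
lemma Pn_nn: "Pn n x \<ge> 0" unfolding Pn_def by (simp add: prod_nonneg p_pos less_imp_le)
lemma Qn_nn: "Qn n x \<ge> 0" unfolding Qn_def by (simp add: prod_nonneg q_pos' less_imp_le)
lemma Vn_nn: "Vn n x y \<ge> 0" unfolding Vn_def by (simp add: prod_nonneg V_nn)

lemma d_le_B: "\<delta> \<le> B" using d_le1 B_ge1 by simp

lemma atyp_one:
  assumes gb: "\<And>a b. \<bar>g a b\<bar> \<le> B"
  shows "(\<Sum>x\<in>{x. length x = n}. if (\<Sum>i<n. h g (x!i)) \<ge> real n * (GG g + \<delta>) then Pn n x else 0) \<le> exp (-(real n * cc))"
proof -
  have "(\<Sum>i<n. \<Sum>a\<in>UNIV. p a * h g a) + real n * \<delta> = real n * (GG g + \<delta>)"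
    by (simp add: h_mean algebra_simps)
  with chernoff[where p="\<lambda>i. p" and g="\<lambda>i. h g" and B=B and \<delta>=\<delta> and n=n,
      OF _ p_sum h_B[OF gb] d_pos d_le_B]
  show ?thesis unfolding Pn_def cc_def by (simp add: p_pos less_imp_le)
qed

lemma cond_one:
  assumes gb: "\<And>a b. \<bar>g a b\<bar> \<le> B"
  shows "(\<Sum>y\<in>{y. length y = n}. if (\<Sum>i<n. g (x!i) (y!i)) \<ge> (\<Sum>i<n. h g (x!i)) + real n * \<delta> then Vn n x y else 0) \<le> exp (-(real n * cc))"
proof -
  have "(\<Sum>i<n. \<Sum>b\<in>UNIV. V (x!i) b * g (x!i) b) = (\<Sum>i<n. h g (x!i))"
    by (simp add: h_def)
  with chernoff[where p="\<lambda>i. V (x!i)" and g="\<lambda>i. g (x!i)" and B=B and \<delta>=\<delta> and n=n,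
      OF V_nn V_sum gb d_pos d_le_B]
  show ?thesis unfolding Vn_def cc_def by simp
qed

end

lemma prod_if_all:
  fixes a :: "nat \<Rightarrow> real"
  shows "(\<Prod>k<K. if P k then a k else 0) = (if \<forall>k<K. P k then (\<Prod>k<K. a k) else 0)"
proof (cases "\<forall>k<K. P k")
  case True thus ?thesis by simp
next
  case False
  then obtain k where "k < K" "\<not> P k" by auto
  thus ?thesis by (auto intro: prod_zero)
qed

context coding begin

lemma atyp:
  "(\<Sum>x\<in>{x. length x = n}. if \<not> typ x then Pn n x else 0) \<le> 3 * exp (-(real n * cc))"
proof -
  let ?A = "\<lambda>g x. if (\<Sum>i<n. h g (x!i)) \<ge> real n * (GG g + \<delta>) then Pn n x else 0"
  have pw: "(if \<not> typ x then Pn n x else 0) \<le> ?A g1 x + ?A \<rho> x + ?A g3 x" if "x \<in> {x. length x = n}" for x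
    using that Pn_nn[of n x] unfolding typ_def by auto
  have "(\<Sum>x\<in>{x. length x = n}. if \<not> typ x then Pn n x else 0)
      \<le> (\<Sum>x\<in>{x. length x = n}. ?A g1 x + ?A \<rho> x + ?A g3 x)"
    by (rule sum_mono) (rule pw)
  also have "\<dots> = (\<Sum>x\<in>{x. length x = n}. ?A g1 x) + (\<Sum>x\<in>{x. length x = n}. ?A \<rho> x) + (\<Sum>x\<in>{x. length x = n}. ?A g3 x)"
    by (simp add: sum.distrib)
  also have "\<dots> \<le> exp (-(real n * cc)) + exp (-(real n * cc)) + exp (-(real n * cc))"
    by (intro add_mono atyp_one g1_B rho_B g3_B)
  finally show ?thesis by simp
qed

lemma Vn_pos_w:
  assumes "Vn n x y \<noteq> 0" "i < n"
  shows "w (x!i) (y!i) > 0"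
proof -
  have "V (x!i) (y!i) \<noteq> 0" using assms unfolding Vn_def by (auto simp: prod_zero_iff)
  hence "w (x!i) (y!i) \<noteq> 0" unfolding V_def by auto
  thus ?thesis using w_nn[of "x!i" "y!i"] by simp
qed

lemma cond_bound:
  assumes len: "length x = n" and ty: "typ x"
  shows "(\<Sum>y\<in>{y. length y = n}. if \<not> J x y then Vn n x y else 0) \<le> 3 * exp (-(real n * cc))"
proof -
  define slack where "slack = ((\<Sum>a\<in>UNIV. \<Sum>b\<in>UNIV. w a b * \<rho> a b) + 2 * \<delta> \<le> D)"
  let ?A = "\<lambda>g y. if (\<Sum>i<n. g (x!i) (y!i)) \<ge> (\<Sum>i<n. h g (x!i)) + real n * \<delta> then Vn n x y else 0"
  let ?A2 = "\<lambda>y. if slack then ?A \<rho> y else 0"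
  have t1: "(\<Sum>i<n. h g1 (x!i)) < real n * (GG g1 + \<delta>)"
   and t2: "(\<Sum>i<n. h \<rho> (x!i)) < real n * (GG \<rho> + \<delta>)"
   and t3: "(\<Sum>i<n. h g3 (x!i)) < real n * (GG g3 + \<delta>)"
    using ty len unfolding typ_def by auto
  have pw: "(if \<not> J x y then Vn n x y else 0) \<le> ?A g1 y + ?A2 y + ?A g3 y" for y
  proof (cases "J x y")
    case True thus ?thesis using Vn_nn[of n x y] by auto
  next
    case False
    have nn: "?A g1 y \<ge> 0" "?A2 y \<ge> 0" "?A g3 y \<ge> 0" using Vn_nn[of n x y] by auto
    consider "\<not> (\<Sum>i<n. g1 (x!i) (y!i)) \<le> real n * (GG g1 + 2*\<delta>)"
      | "\<not> (\<Sum>i<n. \<rho> (x!i) (y!i)) \<le> real n * D"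
      | "\<not> (\<Sum>i<n. g3 (x!i) (y!i)) \<le> real n * (GG g3 + 2*\<delta>)"
      using False len unfolding J_def by auto
    then show ?thesis
    proof cases
      case 1
      hence "(\<Sum>i<n. g1 (x!i) (y!i)) \<ge> (\<Sum>i<n. h g1 (x!i)) + real n * \<delta>"
        using t1 by (simp add: algebra_simps)
      thus ?thesis using False nn by simp
    next
      case 3
      hence "(\<Sum>i<n. g3 (x!i) (y!i)) \<ge> (\<Sum>i<n. h g3 (x!i)) + real n * \<delta>"
        using t3 by (simp add: algebra_simps)
      thus ?thesis using False nn by simp
    next
      case 2
      show ?thesis
      proof (cases slack)
        case True
        hence "GG \<rho> + 2 * \<delta> \<le> D" unfolding slack_def GG_def .
        hence "real n * (GG \<rho> + 2 * \<delta>) \<le> real n * D" by (simp add: mult_left_mono)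
        hence "(\<Sum>i<n. \<rho> (x!i) (y!i)) \<ge> (\<Sum>i<n. h \<rho> (x!i)) + real n * \<delta>"
          using 2 t2 by (simp add: algebra_simps)
        thus ?thesis using False nn True by simp
      next
        case ns: False
        have z: "\<forall>a b. w a b > 0 \<longrightarrow> \<rho> a b = 0" using rho_cond ns unfolding slack_def by auto
        have "Vn n x y = 0"
        proof (rule ccontr)
          assume "Vn n x y \<noteq> 0"
          hence "\<rho> (x!i) (y!i) = 0" if "i < n" for i using Vn_pos_w[OF _ that] z by blast
          hence "(\<Sum>i<n. \<rho> (x!i) (y!i)) = 0" by simp
          thus False using 2 D_nn by simp
        qed
        thus ?thesis using False nn by simp
      qed
    qed
  qed
  have "(\<Sum>y\<in>{y. length y = n}. if \<not> J x y then Vn n x y else 0)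
      \<le> (\<Sum>y\<in>{y. length y = n}. ?A g1 y + ?A2 y + ?A g3 y)"
    by (rule sum_mono) (rule pw)
  also have "\<dots> = (\<Sum>y\<in>{y. length y = n}. ?A g1 y) + (\<Sum>y\<in>{y. length y = n}. ?A2 y) + (\<Sum>y\<in>{y. length y = n}. ?A g3 y)"
    by (simp add: sum.distrib)
  also have "(\<Sum>y\<in>{y. length y = n}. ?A2 y) \<le> exp (-(real n * cc))"
    using cond_one[where g=\<rho> and n=n and x=x, OF rho_B] by (cases slack) auto
  also have "(\<Sum>y\<in>{y. length y = n}. ?A g1 y) \<le> exp (-(real n * cc))"
    by (rule cond_one[OF g1_B])
  also have "(\<Sum>y\<in>{y. length y = n}. ?A g3 y) \<le> exp (-(real n * cc))"
    by (rule cond_one[OF g3_B])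
  finally show ?thesis by simp
qed

lemma V_eq: assumes "w a b > 0" shows "V a b = exp (g1 a b) * q b"
proof -
  have pq: "p a > 0" "q b > 0" using p_pos q_pos' by auto
  hence "w a b / (p a * q b) > 0" using assms by simp
  hence "exp (g1 a b) = w a b / (p a * q b)" unfolding g1_def by simp
  thus ?thesis unfolding V_def using pq by simp
qed

lemma Vn_le:
  assumes len: "length x = n" and j: "J x y"
  shows "Vn n x y \<le> exp (real n * (GG g1 + 2*\<delta>)) * Qn n y"
proof (cases "Vn n x y = 0")
  case True thus ?thesis using Qn_nn[of n y] by simp
next
  case False
  have "Vn n x y = (\<Prod>i<n. exp (g1 (x!i) (y!i)) * q (y!i))"
    unfolding Vn_def using V_eq Vn_pos_w[OF False] by (intro prod.cong) auto
  also have "\<dots> = exp (\<Sum>i<n. g1 (x!i) (y!i)) * Qn n y"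
    unfolding Qn_def by (simp add: prod.distrib exp_sum)
  also have "\<dots> \<le> exp (real n * (GG g1 + 2*\<delta>)) * Qn n y"
    using j len Qn_nn[of n y] unfolding J_def by (intro mult_right_mono) auto
  finally show ?thesis .
qed

lemma qx_lower:
  assumes len: "length x = n" and ty: "typ x" and small: "3 * exp (-(real n * cc)) \<le> 1/2"
  shows "(\<Sum>y\<in>{y. length y = n}. if J x y then Qn n y else 0) \<ge> exp (-(real n * (GG g1 + 2*\<delta>))) / 2"
proof -
  let ?L = "{y::'a list. length y = n}"
  have fin: "finite ?L" using finite_lists_length_eq[of "UNIV::'a set" n] by simp
  have "(\<Sum>y\<in>?L. if J x y then Vn n x y else 0) + (\<Sum>y\<in>?L. if \<not> J x y then Vn n x y else 0) = (\<Sum>y\<in>?L. Vn n x y)"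
    by (simp add: sum.distrib[symmetric] if_distrib) (intro sum.cong; auto)
  hence "(\<Sum>y\<in>?L. if J x y then Vn n x y else 0) \<ge> 1/2"
    using Vn_sum[of n x] cond_bound[OF len ty] small by linarith
  also have "(\<Sum>y\<in>?L. if J x y then Vn n x y else 0) \<le> (\<Sum>y\<in>?L. exp (real n * (GG g1 + 2*\<delta>)) * (if J x y then Qn n y else 0))"
    by (intro sum_mono) (use Vn_le len in auto)
  also have "\<dots> = exp (real n * (GG g1 + 2*\<delta>)) * (\<Sum>y\<in>?L. if J x y then Qn n y else 0)"
    by (simp add: sum_distrib_left)
  finally have "1/2 \<le> exp (real n * (GG g1 + 2*\<delta>)) * (\<Sum>y\<in>?L. if J x y then Qn n y else 0)" .
  hence "exp (-(real n * (GG g1 + 2*\<delta>))) * (1/2) \<le> exp (-(real n * (GG g1 + 2*\<delta>))) * (exp (real n * (GG g1 + 2*\<delta>)) * (\<Sum>y\<in>?L. if J x y then Qn n y else 0))"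
    by (intro mult_left_mono) auto
  also have "\<dots> = (\<Sum>y\<in>?L. if J x y then Qn n y else 0)"
    by (simp add: mult.assoc[symmetric] exp_add[symmetric])
  finally show ?thesis by simp
qed

end

context coding begin

definition "Kn n = nat \<lceil>exp (real n * (GG g1 + 3*\<delta>))\<rceil>"
definition "CB n = {c. length c = Kn n \<and> set c \<subseteq> {y::'a list. length y = n}}"
definition "wt n c = (\<Prod>k<Kn n. Qn n (c!k))"
definition "Fbad n c = (\<Sum>x\<in>{x. length x = n}. if typ x \<and> (\<forall>k<Kn n. \<not> J x (c!k)) then Pn n x else 0)"

lemma finite_L: "finite {y::'a list. length y = n}"
  using finite_lists_length_eq[of "UNIV::'a set" n] by simp

lemma finite_CB: "finite (CB n)"
  unfolding CB_def using finite_lists_length_eq[OF finite_L[of n], of "Kn n"] by (simp add: conj_commute)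

lemma wt_nn: "wt n c \<ge> 0" unfolding wt_def by (simp add: prod_nonneg Qn_nn)

lemma wt_sum: "(\<Sum>c\<in>CB n. wt n c) = 1"
proof -
  have "(\<Sum>c\<in>CB n. wt n c) = (\<Prod>k<Kn n. \<Sum>y\<in>{y::'a list. length y = n}. Qn n y)"
    unfolding CB_def wt_def by (rule sum_lists_prod[OF finite_L])
  thus ?thesis by (simp add: Qn_sum)
qed

lemma per_x:
  assumes len: "length x = n" and ty: "typ x" and small: "3 * exp (-(real n * cc)) \<le> 1/2"
  shows "(\<Sum>c\<in>CB n. wt n c * (if \<forall>k<Kn n. \<not> J x (c!k) then 1 else 0)) \<le> exp (-(real n * \<delta> / 2))"
proof -
  let ?L = "{y::'a list. length y = n}"
  define qx where "qx = (\<Sum>y\<in>?L. if J x y then Qn n y else 0)"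
  have qx_low: "qx \<ge> exp (-(real n * (GG g1 + 2*\<delta>))) / 2"
    unfolding qx_def by (rule qx_lower[OF len ty small])
  have qx_nn: "qx \<ge> 0" unfolding qx_def by (intro sum_nonneg) (simp add: Qn_nn)
  have compl: "(\<Sum>y\<in>?L. if \<not> J x y then Qn n y else 0) = 1 - qx"
  proof -
    have "(\<Sum>y\<in>?L. if \<not> J x y then Qn n y else 0) + qx = (\<Sum>y\<in>?L. Qn n y)"
      unfolding qx_def by (simp add: sum.distrib[symmetric]) (intro sum.cong; auto)
    thus ?thesis using Qn_sum[of n] by simp
  qed
  have "(\<Sum>c\<in>CB n. wt n c * (if \<forall>k<Kn n. \<not> J x (c!k) then 1 else 0))
      = (\<Sum>c\<in>CB n. \<Prod>k<Kn n. if \<not> J x (c!k) then Qn n (c!k) else 0)"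
    unfolding wt_def by (intro sum.cong refl) (subst prod_if_all, auto)
  also have "\<dots> = (\<Prod>k<Kn n. \<Sum>y\<in>?L. if \<not> J x y then Qn n y else 0)"
    unfolding CB_def by (rule sum_lists_prod[OF finite_L])
  also have "\<dots> = (1 - qx) ^ Kn n" by (simp add: compl)
  also have "\<dots> \<le> exp (- qx) ^ Kn n"
  proof (rule power_mono)
    show "1 - qx \<le> exp (- qx)" using exp_ge_add_one_self[of "-qx"] by simp
    have "qx \<le> 1"
    proof -
      have "(\<Sum>y\<in>?L. if \<not> J x y then Qn n y else 0) \<ge> 0" by (intro sum_nonneg) (simp add: Qn_nn)
      thus ?thesis using compl by simp
    qed
    thus "0 \<le> 1 - qx" by simp
  qed
  also have "\<dots> = exp (- (real (Kn n) * qx))" by (simp add: exp_of_nat_mult[symmetric])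
  also have "\<dots> \<le> exp (-(real n * \<delta> / 2))"
  proof -
    have K: "real (Kn n) \<ge> exp (real n * (GG g1 + 3*\<delta>))"
      unfolding Kn_def by (rule real_nat_ceiling_ge)
    have "real (Kn n) * qx \<ge> exp (real n * (GG g1 + 3*\<delta>)) * (exp (-(real n * (GG g1 + 2*\<delta>))) / 2)"
      using K qx_low qx_nn by (intro mult_mono) auto
    also have "exp (real n * (GG g1 + 3*\<delta>)) * (exp (-(real n * (GG g1 + 2*\<delta>))) / 2) = exp (real n * \<delta>) / 2"
      by (simp add: exp_add[symmetric] algebra_simps)
    also have "exp (real n * \<delta>) / 2 \<ge> real n * \<delta> / 2"
      using exp_ge_add_one_self[of "real n * \<delta>"] by linarith
    finally show ?thesis by simp
  qed
  finally show ?thesis .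
qed

lemma codebook:
  assumes small: "3 * exp (-(real n * cc)) \<le> 1/2"
  shows "\<exists>c\<in>CB n. Fbad n c \<le> exp (-(real n * \<delta> / 2))"
proof -
  let ?L = "{x::'a list. length x = n}"
  let ?e = "exp (-(real n * \<delta> / 2))"
  have "(\<Sum>c\<in>CB n. wt n c * Fbad n c)
      = (\<Sum>c\<in>CB n. \<Sum>x\<in>?L. Pn n x * (if typ x then wt n c * (if \<forall>k<Kn n. \<not> J x (c!k) then 1 else 0) else 0))"
    unfolding Fbad_def sum_distrib_left by (intro sum.cong refl) auto
  also have "\<dots> = (\<Sum>x\<in>?L. Pn n x * (if typ x then (\<Sum>c\<in>CB n. wt n c * (if \<forall>k<Kn n. \<not> J x (c!k) then 1 else 0)) else 0))"
  proof (subst sum.swap, rule sum.cong[OF refl])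
    fix x
    show "(\<Sum>c\<in>CB n. Pn n x * (if typ x then wt n c * (if \<forall>k<Kn n. \<not> J x (c!k) then 1 else 0) else 0))
       = Pn n x * (if typ x then (\<Sum>c\<in>CB n. wt n c * (if \<forall>k<Kn n. \<not> J x (c!k) then 1 else 0)) else 0)"
      by (cases "typ x") (simp_all add: sum_distrib_left)
  qed
  also have "\<dots> \<le> (\<Sum>x\<in>?L. Pn n x * ?e)"
  proof (intro sum_mono mult_left_mono Pn_nn)
    fix x assume x: "x \<in> ?L"
    show "(if typ x then (\<Sum>c\<in>CB n. wt n c * (if \<forall>k<Kn n. \<not> J x (c!k) then 1 else 0)) else 0) \<le> ?e"
      using per_x[of x n] x small by auto
  qed
  also have "\<dots> = ?e" using Pn_sum[of n] by (simp add: sum_distrib_right[symmetric])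
  finally have tot: "(\<Sum>c\<in>CB n. wt n c * Fbad n c) \<le> ?e" .
  have ne: "CB n \<noteq> {}"
  proof -
    have "replicate (Kn n) (replicate n undefined) \<in> CB n" unfolding CB_def by auto
    thus ?thesis by auto
  qed
  define m where "m = Min (Fbad n ` CB n)"
  have m_in: "m \<in> Fbad n ` CB n" unfolding m_def using finite_CB ne by (intro Min_in) auto
  have m_le: "m \<le> Fbad n c" if "c \<in> CB n" for c unfolding m_def using finite_CB that by (intro Min_le) auto
  have "m = (\<Sum>c\<in>CB n. wt n c * m)" using wt_sum[of n] by (simp add: sum_distrib_right[symmetric])
  also have "\<dots> \<le> (\<Sum>c\<in>CB n. wt n c * Fbad n c)"
    by (intro sum_mono mult_left_mono wt_nn m_le)
  finally have "m \<le> ?e" using tot by simp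
  thus ?thesis using m_in by auto
qed

end

lemma prod_list_map_nth: "prod_list (map f xs) = (\<Prod>i<length xs. f (xs!i))"
  by (induction xs) (simp_all add: prod.lessThan_Suc_shift del: prod.lessThan_Suc)

context coding begin

lemma cc_pos: "cc > 0" unfolding cc_def using d_pos B_ge1 by simp

lemma small_eventually: "\<exists>N1. \<forall>n\<ge>N1. 3 * exp (-(real n * cc)) \<le> 1/2"
proof (intro exI allI impI)
  fix n assume n: "n \<ge> nat \<lceil>5 / cc\<rceil>"
  have "real n \<ge> 5 / cc" using n real_nat_ceiling_ge[of "5/cc"] by linarith
  hence "real n * cc \<ge> 5" using cc_pos by (simp add: field_simps)
  hence "exp (real n * cc) \<ge> 6" using exp_ge_add_one_self[of "real n * cc"] by linarith
  hence "exp (-(real n * cc)) \<le> 1/6" by (simp add: exp_minus field_simps)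
  thus "3 * exp (-(real n * cc)) \<le> 1/2" by simp
qed

lemma coding_main:
  assumes G1_nn: "GG g1 \<ge> 0" and eta: "6 * \<delta> \<le> \<eta>"
  shows "\<exists>C :: nat \<Rightarrow> 'a list set.
           (\<forall>n\<ge>1. C n \<subseteq> {xs. length xs = n}) \<and>
           (\<forall>n\<ge>1. Mn_set M (C n) > 0 \<longrightarrow> ln (Mn_set M (C n)) / real n \<le> GG g1 + GG g3 + \<eta>) \<and>
           (AE \<omega> in PiM UNIV (\<lambda>_::nat. measure_pmf P).
               eventually (\<lambda>n. \<exists>y\<in>C n. rho_n \<rho> (map \<omega> [0..<n]) y \<le> D) sequentially)"
proof -
  obtain N1 where N1: "\<And>n. n \<ge> N1 \<Longrightarrow> 3 * exp (-(real n * cc)) \<le> 1/2"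
    using small_eventually by blast
  define N where "N = max (max N1 (nat \<lceil>1/\<delta>\<rceil>)) 1"
  have N_ge: "n \<ge> N \<Longrightarrow> 3 * exp (-(real n * cc)) \<le> 1/2 \<and> real n * \<delta> \<ge> 1 \<and> n \<ge> 1" for n
  proof -
    assume n: "n \<ge> N"
    have "real n \<ge> 1/\<delta>" using n real_nat_ceiling_ge[of "1/\<delta>"] unfolding N_def by linarith
    hence "real n * \<delta> \<ge> 1" using d_pos by (simp add: field_simps)
    thus ?thesis using n N1 unfolding N_def by auto
  qed
  define cb where "cb n = (SOME c. c \<in> CB n \<and> Fbad n c \<le> exp (-(real n * \<delta> / 2)))" for n
  have cb: "cb n \<in> CB n \<and> Fbad n (cb n) \<le> exp (-(real n * \<delta> / 2))" if "n \<ge> N" for n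
  proof -
    have "\<exists>c. c \<in> CB n \<and> Fbad n c \<le> exp (-(real n * \<delta> / 2))"
      using codebook[of n] N_ge[OF that] by blast
    thus ?thesis unfolding cb_def by (rule someI_ex)
  qed
  define C where "C n = (if n \<ge> N then {y \<in> set (cb n). (\<Sum>i<n. ln (M (y!i))) \<le> real n * (GG g3 + 2*\<delta>)} else {})" for n
  have C_sub: "C n \<subseteq> {xs. length xs = n}" for n
    using cb[of n] unfolding C_def CB_def by auto
  have rate: "ln (Mn_set M (C n)) / real n \<le> GG g1 + GG g3 + \<eta>" if n1: "n \<ge> 1" and pos: "Mn_set M (C n) > 0" for n
  proof -
    have nN: "n \<ge> N"
    proof (rule ccontr)
      assume "\<not> n \<ge> N" hence "C n = {}" unfolding C_def by auto
      thus False using pos by (simp add: Mn_set_def)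
    qed
    have cbn: "cb n \<in> CB n" using cb[OF nN] by simp
    have Mn_le: "Mn M y \<le> exp (real n * (GG g3 + 2*\<delta>))" if y: "y \<in> C n" for y
    proof -
      have len: "length y = n" using y C_sub by auto
      have "Mn M y = (\<Prod>i<n. M (y!i))" unfolding Mn_def by (simp add: prod_list_map_nth len)
      also have "\<dots> = (\<Prod>i<n. exp (ln (M (y!i))))" using M_pos by simp
      also have "\<dots> = exp (\<Sum>i<n. ln (M (y!i)))" by (simp add: exp_sum)
      also have "\<dots> \<le> exp (real n * (GG g3 + 2*\<delta>))" using y nN unfolding C_def by simp
      finally show ?thesis .
    qed
    have cardC: "real (card (C n)) \<le> real (Kn n)"
    proof -
      have "card (C n) \<le> card (set (cb n))" unfolding C_def using nN by (auto intro: card_mono)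
      also have "\<dots> \<le> length (cb n)" by (rule card_length)
      also have "\<dots> = Kn n" using cbn unfolding CB_def by simp
      finally show ?thesis by simp
    qed
    have Kle: "real (Kn n) \<le> 2 * exp (real n * (GG g1 + 3*\<delta>))"
    proof -
      have e1: "exp (real n * (GG g1 + 3*\<delta>)) \<ge> 1" using G1_nn d_pos by simp
      have "real (Kn n) = real_of_int \<lceil>exp (real n * (GG g1 + 3*\<delta>))\<rceil>"
        unfolding Kn_def using e1 by (simp add: of_nat_nat)
      also have "\<dots> \<le> exp (real n * (GG g1 + 3*\<delta>)) + 1" by simp
      finally show ?thesis using e1 by linarith
    qed
    have finC: "finite (C n)" using C_sub[of n] finite_L[of n] by (auto intro: finite_subset)
    have "Mn_set M (C n) \<le> (\<Sum>y\<in>C n. exp (real n * (GG g3 + 2*\<delta>)))"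
      unfolding Mn_set_def by (intro sum_mono Mn_le)
    also have "\<dots> = real (card (C n)) * exp (real n * (GG g3 + 2*\<delta>))" by simp
    also have "\<dots> \<le> 2 * exp (real n * (GG g1 + 3*\<delta>)) * exp (real n * (GG g3 + 2*\<delta>))"
      using cardC Kle by (intro mult_right_mono) auto
    also have "\<dots> = 2 * exp (real n * (GG g1 + GG g3 + 5*\<delta>))"
      by (simp add: exp_add[symmetric] algebra_simps)
    finally have Mle: "Mn_set M (C n) \<le> 2 * exp (real n * (GG g1 + GG g3 + 5*\<delta>))" .
    have "ln (Mn_set M (C n)) \<le> ln (2 * exp (real n * (GG g1 + GG g3 + 5*\<delta>)))"
      using Mle pos by (intro ln_mono) auto
    also have "\<dots> = ln 2 + real n * (GG g1 + GG g3 + 5*\<delta>)" by (simp add: ln_mult)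
    also have "\<dots> \<le> real n * (GG g1 + GG g3 + \<eta>)"
    proof -
      have "ln (2::real) \<le> 1" using ln_le_minus_one[of 2] by simp
      also have "1 \<le> real n * \<delta>" using N_ge[OF nN] by simp
      finally have "ln 2 \<le> real n * \<delta>" .
      hence f1: "real n * (5*\<delta>) + ln 2 \<le> real n * (6*\<delta>)" by (simp add: algebra_simps)
      have f2: "real n * (6*\<delta>) \<le> real n * \<eta>" by (rule mult_left_mono) (use eta in auto)
      have f: "real n * (5*\<delta>) + ln 2 \<le> real n * \<eta>" using f1 f2 by (rule order_trans)
      show ?thesis using f by (simp add: algebra_simps)
    qed
    finally show ?thesis using n1 by (simp add: field_simps)
  qed
  let ?M = "PiM UNIV (\<lambda>_::nat. measure_pmf P)"
  interpret PM: prob_space ?M by (intro prob_space_PiM) (simp add: prob_space_measure_pmf)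
  define bad where "bad n = {x \<in> {x::'a list. length x = n}. \<not> (\<exists>y\<in>C n. rho_n \<rho> x y \<le> D)}" for n
  define A where "A n = (if n \<ge> N then {\<omega>. map \<omega> [0..<n] \<in> bad n} else {})" for n
  have bad_sub: "bad n \<subseteq> {x. length x = n}" for n unfolding bad_def by auto
  have A_sets: "A n \<in> sets ?M" for n
    unfolding A_def using bridge(1)[OF bad_sub[of n], of P] by auto
  have A_meas: "measure ?M (A n) \<le> 3 * exp (-cc) ^ n + exp (-\<delta>/2) ^ n" for n
  proof (cases "n \<ge> N")
    case False thus ?thesis unfolding A_def by simp
  next
    case nN: True
    have cbn: "cb n \<in> CB n" and Fb: "Fbad n (cb n) \<le> exp (-(real n * \<delta> / 2))" using cb[OF nN] by auto
    have "measure ?M (A n) = (\<Sum>x\<in>bad n. \<Prod>i<n. pmf P (x!i))"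
      unfolding A_def using nN bridge(2)[OF bad_sub[of n], of P] by simp
    also have "\<dots> = (\<Sum>x\<in>bad n. Pn n x)" unfolding Pn_def p_def by simp
    also have "\<dots> = (\<Sum>x\<in>{x. length x = n}. if x \<in> bad n then Pn n x else 0)"
      using bad_sub[of n] finite_L[of n] by (simp add: sum.If_cases Int_absorb1)
    also have "\<dots> \<le> (\<Sum>x\<in>{x. length x = n}. (if \<not> typ x then Pn n x else 0) +
                      (if typ x \<and> (\<forall>k<Kn n. \<not> J x (cb n ! k)) then Pn n x else 0))"
    proof (intro sum_mono)
      fix x assume x: "x \<in> {x::'a list. length x = n}"
      show "(if x \<in> bad n then Pn n x else 0) \<le> (if \<not> typ x then Pn n x else 0) +
                      (if typ x \<and> (\<forall>k<Kn n. \<not> J x (cb n ! k)) then Pn n x else 0)"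
      proof (cases "x \<in> bad n \<and> typ x \<and> (\<exists>k<Kn n. J x (cb n ! k))")
        case True
        then obtain k where k: "k < Kn n" "J x (cb n ! k)" and xb: "x \<in> bad n" by auto
        define y where "y = cb n ! k"
        have yin: "y \<in> set (cb n)" using k cbn unfolding y_def CB_def by auto
        hence leny: "length y = n" using cbn unfolding CB_def by auto
        have lenx: "length x = n" using x by simp
        have "(\<Sum>i<n. ln (M (y!i))) \<le> real n * (GG g3 + 2*\<delta>)"
          using k lenx unfolding J_def y_def g3_def by simp
        hence yC: "y \<in> C n" unfolding C_def using nN yin by simp
        have "(\<Sum>i<n. \<rho> (x!i) (y!i)) \<le> real n * D" using k lenx unfolding J_def y_def by simp
        hence "rho_n \<rho> x y \<le> D" unfolding rho_n_def using lenx N_ge[OF nN]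
          by (simp add: divide_le_eq mult.commute)
        thus ?thesis using xb yC unfolding bad_def by auto
      next
        case False thus ?thesis using Pn_nn[of n x] by auto
      qed
    qed
    also have "\<dots> = (\<Sum>x\<in>{x. length x = n}. if \<not> typ x then Pn n x else 0) + Fbad n (cb n)"
      unfolding Fbad_def by (simp add: sum.distrib)
    also have "\<dots> \<le> 3 * exp (-(real n * cc)) + exp (-(real n * \<delta> / 2))"
      using atyp[of n] Fb by simp
    also have "\<dots> = 3 * exp (-cc) ^ n + exp (-\<delta>/2) ^ n"
      by (simp add: exp_of_nat_mult[symmetric] mult.commute)
    finally show ?thesis .
  qed
  have summ: "summable (\<lambda>n. measure ?M (A n))"
  proof (rule summable_comparison_test)
    show "\<exists>N. \<forall>n\<ge>N. norm (measure ?M (A n)) \<le> 3 * exp (-cc) ^ n + exp (-\<delta>/2) ^ n"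
      using A_meas by auto
    show "summable (\<lambda>n. 3 * exp (-cc) ^ n + exp (-\<delta>/2) ^ n)"
      using cc_pos d_pos by (intro summable_add summable_mult summable_geometric) auto
  qed
  have "AE \<omega> in ?M. eventually (\<lambda>n. \<omega> \<in> space ?M - A n) sequentially"
    by (rule borel_cantelli_AE1[OF A_sets _ summ]) (simp add: less_top[symmetric] PM.emeasure_finite)
  hence ae: "AE \<omega> in ?M. eventually (\<lambda>n. \<exists>y\<in>C n. rho_n \<rho> (map \<omega> [0..<n]) y \<le> D) sequentially"
  proof (rule eventually_mono)
    fix \<omega> assume ev: "eventually (\<lambda>n. \<omega> \<in> space ?M - A n) sequentially"
    have "eventually (\<lambda>n. n \<ge> N) sequentially" by (rule eventually_ge_at_top)
    with ev show "eventually (\<lambda>n. \<exists>y\<in>C n. rho_n \<rho> (map \<omega> [0..<n]) y \<le> D) sequentially"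
    proof (rule eventually_elim2)
      fix n assume "\<omega> \<in> space ?M - A n" "n \<ge> N"
      hence "map \<omega> [0..<n] \<notin> bad n" unfolding A_def by auto
      thus "\<exists>y\<in>C n. rho_n \<rho> (map \<omega> [0..<n]) y \<le> D" unfolding bad_def by auto
    qed
  qed
  show ?thesis
  proof (intro exI[of _ C] conjI)
    show "\<forall>n\<ge>1. C n \<subseteq> {xs. length xs = n}" using C_sub by simp
    show "\<forall>n\<ge>1. Mn_set M (C n) > 0 \<longrightarrow> ln (Mn_set M (C n)) / real n \<le> GG g1 + GG g3 + \<eta>"
      using rate by simp
  qed (rule ae)
qed

end

lemma sum_pairs:
  fixes f :: "('a::finite \<times> 'b::finite) \<Rightarrow> real"
  shows "(\<Sum>s\<in>UNIV. f s) = (\<Sum>a\<in>UNIV. \<Sum>b\<in>UNIV. f (a,b))"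
proof -
  have "(\<Sum>a\<in>UNIV. \<Sum>b\<in>UNIV. f (a,b)) = (\<Sum>(a,b)\<in>UNIV\<times>UNIV. f (a,b))" by (rule sum.cartesian_product)
  also have "\<dots> = (\<Sum>s\<in>UNIV. f s)" by (simp add: UNIV_Times_UNIV)
  finally show ?thesis by simp
qed

lemma pmf_fst_sum:
  fixes W :: "('a::finite \<times> 'b::finite) pmf"
  shows "pmf (map_pmf fst W) a = (\<Sum>b\<in>UNIV. pmf W (a,b))"
proof -
  have "pmf (map_pmf fst W) a = measure_pmf.prob W (fst -` {a})" by (rule pmf_map)
  also have "\<dots> = sum (pmf W) (fst -` {a})" by (rule measure_measure_pmf_finite) simp
  also have "fst -` {a} = Pair a ` UNIV" by auto
  also have "sum (pmf W) (Pair a ` UNIV) = (\<Sum>b\<in>UNIV. pmf W (a,b))"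
    by (subst sum.reindex) (auto simp: inj_on_def)
  finally show ?thesis .
qed

lemma pmf_snd_sum:
  fixes W :: "('a::finite \<times> 'b::finite) pmf"
  shows "pmf (map_pmf snd W) b = (\<Sum>a\<in>UNIV. pmf W (a,b))"
proof -
  have "pmf (map_pmf snd W) b = measure_pmf.prob W (snd -` {b})" by (rule pmf_map)
  also have "\<dots> = sum (pmf W) (snd -` {b})" by (rule measure_measure_pmf_finite) simp
  also have "snd -` {b} = (\<lambda>a. (a,b)) ` UNIV" by auto
  also have "sum (pmf W) ((\<lambda>a. (a,b)) ` UNIV) = (\<Sum>a\<in>UNIV. pmf W (a,b))"
    by (subst sum.reindex) (auto simp: inj_on_def)
  finally show ?thesis .
qed

lemma expectation_finite:
  fixes Q :: "('b::finite) pmf" and f :: "'b \<Rightarrow> real"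
  shows "measure_pmf.expectation Q f = (\<Sum>a\<in>UNIV. pmf Q a * f a)"
  by (subst integral_measure_pmf[of UNIV]) auto


lemma rel_ent_nonneg: "rel_ent \<mu> \<nu> \<ge> 0"
proof (cases "\<exists>s. pmf \<mu> s > 0 \<and> pmf \<nu> s = 0")
  case True thus ?thesis unfolding rel_ent_def by simp
next
  case False
  have eq: "(\<Sum>s\<in>UNIV. if pmf \<mu> s = 0 then 0 else pmf \<mu> s * ln (pmf \<mu> s / pmf \<nu> s))
        = (\<Sum>s\<in>UNIV. pmf \<mu> s * ln (pmf \<mu> s / pmf \<nu> s))" by (intro sum.cong) auto
  have "(\<Sum>s\<in>UNIV. pmf \<mu> s * ln (pmf \<mu> s / pmf \<nu> s)) \<ge> 0"
  proof (rule gibbs)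
    show "pmf \<nu> s > 0" if "pmf \<mu> s > 0" for s using False that pmf_nonneg[of \<nu> s] by force
    show "(\<Sum>s\<in>UNIV. pmf \<mu> s) = 1" by (rule sum_pmf_eq_1) auto
    show "(\<Sum>s\<in>UNIV. pmf \<nu> s) \<le> 1" by (subst sum_pmf_eq_1) auto
  qed auto
  thus ?thesis unfolding rel_ent_def using False eq by simp
qed

lemma I_PQD_nonneg: "I_PQD P Q \<rho> D \<ge> 0"
  unfolding I_PQD_def by (rule INF_greatest) (rule rel_ent_nonneg)

lemma R_lower:
  fixes P :: "('a::finite) pmf"
  shows "R_fun P M \<rho> D \<ge> ereal (-(\<Sum>a\<in>UNIV. \<bar>ln (M a)\<bar>))"
  unfolding R_fun_def
proof (rule INF_greatest)
  fix Q :: "'a pmf"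
  have "(\<Sum>a\<in>UNIV. pmf Q a * ln (M a)) \<ge> (\<Sum>a\<in>UNIV. -\<bar>ln (M a)\<bar>)"
  proof (intro sum_mono)
    fix a
    have "pmf Q a * \<bar>ln (M a)\<bar> \<le> 1 * \<bar>ln (M a)\<bar>" by (intro mult_right_mono pmf_le_1) auto
    moreover have "pmf Q a * ln (M a) \<ge> - (pmf Q a * \<bar>ln (M a)\<bar>)"
      using abs_ge_minus_self[of "pmf Q a * ln (M a)"] pmf_nonneg[of Q a] by (simp add: abs_mult)
    ultimately show "pmf Q a * ln (M a) \<ge> -\<bar>ln (M a)\<bar>" by simp
  qed
  hence e: "measure_pmf.expectation Q (\<lambda>y. ln (M y)) \<ge> -(\<Sum>a\<in>UNIV. \<bar>ln (M a)\<bar>)"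
    by (simp add: expectation_finite sum_negf)
  have "ereal (-(\<Sum>a\<in>UNIV. \<bar>ln (M a)\<bar>)) \<le> 0 + ereal (measure_pmf.expectation Q (\<lambda>y. ln (M y)))"
    using e by simp
  also have "\<dots> \<le> I_PQD P Q \<rho> D + ereal (measure_pmf.expectation Q (\<lambda>y. ln (M y)))"
    by (intro add_right_mono I_PQD_nonneg)
  finally show "ereal (-(\<Sum>a\<in>UNIV. \<bar>ln (M a)\<bar>)) \<le> I_PQD P Q \<rho> D + ereal (measure_pmf.expectation Q (\<lambda>y. ln (M y)))" .
qed


lemma mixing_term:
  fixes w pa qb pb lam :: real
  assumes "w \<ge> 0" "pa > 0" "pb > 0" "qb \<ge> 0" "w > 0 \<Longrightarrow> qb > 0" "0 < lam" "lam < 1"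
  shows "((1-lam) * w + (if e then lam * pa else 0)) * ln (((1-lam) * w + (if e then lam * pa else 0)) / (pa * ((1-lam) * qb + lam * pb)))
     \<le> (1-lam) * (w * ln (w / (pa * qb))) + (if e then lam * pa * ln (pa / (pa * pb)) else 0)"
proof -
  let ?a1 = "(1-lam) * w" and ?a2 = "if e then lam * pa else 0"
  let ?b1 = "(1-lam) * (pa * qb)" and ?b2 = "lam * (pa * pb)"
  have ls: "(?a1 + ?a2) * ln ((?a1 + ?a2) / (?b1 + ?b2)) \<le> ?a1 * ln (?a1 / ?b1) + ?a2 * ln (?a2 / ?b2)"
  proof (rule log_sum2)
    show "?a1 > 0 \<Longrightarrow> ?b1 > 0"
    proof -
      assume "?a1 > 0"
      hence "w > 0" using assms by (simp add: zero_less_mult_iff)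
      hence "qb > 0" using assms by simp
      thus "?b1 > 0" using assms by simp
    qed
    show "?a2 > 0 \<Longrightarrow> ?b2 > 0" using assms by simp
  qed (use assms in auto)
  have b: "?b1 + ?b2 = pa * ((1-lam) * qb + lam * pb)" by (simp add: algebra_simps)
  have a1: "?a1 * ln (?a1 / ?b1) = (1-lam) * (w * ln (w / (pa * qb)))"
    using assms by simp
  have a2: "?a2 * ln (?a2 / ?b2) = (if e then lam * pa * ln (pa / (pa * pb)) else 0)"
    using assms by simp
  show ?thesis using ls unfolding b a1 a2 .
qed

theorem theorem2:
  fixes P :: "('a::finite) pmf" and \<rho> :: "'a \<Rightarrow> 'a \<Rightarrow> real" and M :: "'a \<Rightarrow> real"
    and D \<epsilon> :: real
  assumes P_pos: "\<And>a. pmf P a > 0"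
    and rho_nonneg: "\<And>x y. \<rho> x y \<ge> 0"
    and M_pos: "\<And>a. M a > 0"
    and rho_zero: "\<And>x y. \<rho> x y = 0 \<longleftrightarrow> x = y"
    and D: "D \<ge> 0" and eps: "\<epsilon> > 0"
  shows "\<exists>C :: nat \<Rightarrow> 'a list set.
           (\<forall>n\<ge>1. C n \<subseteq> {xs. length xs = n}) \<and>
           (\<forall>n\<ge>1. Mn_set M (C n) > 0 \<longrightarrow>
               ereal (ln (Mn_set M (C n)) / real n) \<le> R_fun P M \<rho> D + ereal \<epsilon>) \<and>
           (AE \<omega> in PiM UNIV (\<lambda>_::nat. measure_pmf P).
               eventually (\<lambda>n. \<exists>y\<in>C n. rho_n \<rho> (map \<omega> [0..<n]) y \<le> D) sequentially)"
proof -
  let ?R = "R_fun P M \<rho> D"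
  have rho_diag: "\<rho> a a = 0" for a using rho_zero[of a a] by simp
  show ?thesis
  proof (cases "?R = \<infinity>")
    case True
    have rz: "rho_n \<rho> x x = 0" for x unfolding rho_n_def by (simp add: rho_diag)
    show ?thesis
    proof (intro exI[of _ "\<lambda>n. {xs::'a list. length xs = n}"] conjI)
      show "AE \<omega> in PiM UNIV (\<lambda>_::nat. measure_pmf P).
               eventually (\<lambda>n. \<exists>y\<in>{xs. length xs = n}. rho_n \<rho> (map \<omega> [0..<n]) y \<le> D) sequentially"
      proof (intro AE_I2 always_eventually allI)
        fix \<omega> :: "nat \<Rightarrow> 'a" and n
        show "\<exists>y\<in>{xs. length xs = n}. rho_n \<rho> (map \<omega> [0..<n]) y \<le> D"
          by (rule bexI[of _ "map \<omega> [0..<n]"]) (simp_all add: rz D)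
      qed
    qed (use True in auto)
  next
    case False
    obtain r where r: "?R = ereal r"
      using R_lower[where P=P and M=M and \<rho>=\<rho> and D=D] False by (cases ?R) auto
    define EQf where "EQf Q = measure_pmf.expectation Q (\<lambda>y. ln (M y))" for Q :: "'a pmf"
    have "?R < ereal (r + \<epsilon>/4)" using r eps by simp
    then obtain Q where Q: "I_PQD P Q \<rho> D + ereal (EQf Q) < ereal (r + \<epsilon>/4)"
      unfolding R_fun_def EQf_def by (auto simp: INF_less_iff)
    have "I_PQD P Q \<rho> D < ereal (r + \<epsilon>/4 - EQf Q)"
      using Q by (cases "I_PQD P Q \<rho> D") auto
    then obtain W where W: "W \<in> couplings P Q \<rho> D"
      and Wl: "rel_ent W (pair_pmf P Q) < ereal (r + \<epsilon>/4 - EQf Q)"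
      unfolding I_PQD_def by (auto simp: INF_less_iff)
    define pP where "pP a = pmf P a" for a
    define wW where "wW a b = pmf W (a,b)" for a b
    define qQ where "qQ b = pmf Q b" for b
    have pP_pos: "pP a > 0" for a unfolding pP_def by (rule P_pos)
    have wW_nn: "wW a b \<ge> 0" for a b unfolding wW_def by simp
    have marg1: "(\<Sum>b\<in>UNIV. wW a b) = pP a" for a
    proof -
      have "pmf P a = pmf (map_pmf fst W) a" using W by (simp add: couplings_def)
      thus ?thesis unfolding pP_def wW_def by (simp add: pmf_fst_sum)
    qed
    have marg2: "(\<Sum>a\<in>UNIV. wW a b) = qQ b" for b
    proof -
      have "pmf Q b = pmf (map_pmf snd W) b" using W by (simp add: couplings_def)
      thus ?thesis unfolding qQ_def wW_def by (simp add: pmf_snd_sum)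
    qed
    have pP_sum: "(\<Sum>a\<in>UNIV. pP a) = 1" unfolding pP_def by (simp add: sum_pmf_eq_1)
    have distW: "(\<Sum>a\<in>UNIV. \<Sum>b\<in>UNIV. wW a b * \<rho> a b) \<le> D"
    proof -
      have "measure_pmf.expectation W (\<lambda>(x, y). \<rho> x y) = (\<Sum>s\<in>UNIV. pmf W s * (case s of (x, y) \<Rightarrow> \<rho> x y))"
        by (rule expectation_finite)
      also have "\<dots> = (\<Sum>a\<in>UNIV. \<Sum>b\<in>UNIV. wW a b * \<rho> a b)"
        unfolding wW_def by (subst sum_pairs) simp
      finally show ?thesis using W by (simp add: couplings_def)
    qed
    have w_le_q: "wW a b \<le> qQ b" for a b
      unfolding marg2[symmetric] by (rule member_le_sum) (auto simp: wW_nn)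
    have nz: "\<not> (\<exists>s. pmf W s > 0 \<and> pmf (pair_pmf P Q) s = 0)"
    proof
      assume "\<exists>s. pmf W s > 0 \<and> pmf (pair_pmf P Q) s = 0"
      hence "rel_ent W (pair_pmf P Q) = \<infinity>" unfolding rel_ent_def by simp
      thus False using Wl by simp
    qed
    define IW where "IW = (\<Sum>a\<in>UNIV. \<Sum>b\<in>UNIV. wW a b * ln (wW a b / (pP a * qQ b)))"
    have relv: "rel_ent W (pair_pmf P Q) = ereal IW"
    proof -
      have "(\<Sum>s\<in>UNIV. if pmf W s = 0 then 0 else pmf W s * ln (pmf W s / pmf (pair_pmf P Q) s))
          = (\<Sum>s\<in>UNIV. pmf W s * ln (pmf W s / pmf (pair_pmf P Q) s))" by (intro sum.cong) auto
      also have "\<dots> = IW" unfolding IW_def wW_def pP_def qQ_def by (subst sum_pairs) (simp add: pmf_pair)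
      finally show ?thesis unfolding rel_ent_def using nz by simp
    qed
    define EQ where "EQ = (\<Sum>b\<in>UNIV. qQ b * ln (M b))"
    have EQ_eq: "EQf Q = EQ" unfolding EQf_def EQ_def qQ_def by (rule expectation_finite)
    have IWl: "IW + EQ < r + \<epsilon>/4" using Wl relv EQ_eq by simp
    define EP where "EP = (\<Sum>a\<in>UNIV. pP a * ln (M a))"
    define Hp where "Hp = (\<Sum>a\<in>UNIV. pP a * ln (pP a / (pP a * pP a)))"
    define Z where "Z = Hp + EP - IW - EQ"
    define lam where "lam = min (1/2) (\<epsilon> / (4 * (1 + \<bar>Z\<bar>)))"
    have lam_pos: "lam > 0" unfolding lam_def using eps by (simp add: add_pos_nonneg)
    have lam_lt1: "lam < 1" unfolding lam_def by simp
    have lamZ: "lam * Z \<le> \<epsilon>/4"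
    proof -
      have "lam * Z \<le> lam * \<bar>Z\<bar>" using lam_pos by (simp add: mult_left_mono)
      also have "\<dots> \<le> (\<epsilon> / (4 * (1 + \<bar>Z\<bar>))) * \<bar>Z\<bar>" unfolding lam_def by (intro mult_right_mono) auto
      also have "\<dots> \<le> (\<epsilon> / (4 * (1 + \<bar>Z\<bar>))) * (1 + \<bar>Z\<bar>)" using eps by (intro mult_left_mono) auto
      also have "\<dots> = \<epsilon>/4" by (simp add: field_simps add_pos_nonneg)
      finally show ?thesis .
    qed
    define w' where "w' a b = (1-lam) * wW a b + (if a = b then lam * pP a else 0)" for a b
    define q' where "q' b = (1-lam) * qQ b + lam * pP b" for b
    have w'_nn: "w' a b \<ge> 0" for a b
    proof -
      have "(1-lam) * wW a b \<ge> 0" using lam_lt1 wW_nn[of a b] by simp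
      moreover have "(if a = b then lam * pP a else 0) \<ge> 0" using lam_pos pP_pos[of a] by (cases "a = b") (auto simp: less_imp_le)
      ultimately show ?thesis unfolding w'_def by linarith
    qed
    have w'_marg: "(\<Sum>b\<in>UNIV. w' a b) = pP a" for a
    proof -
      have "(\<Sum>b\<in>UNIV. w' a b) = (\<Sum>b\<in>UNIV. (1-lam) * wW a b) + (\<Sum>b\<in>UNIV. if a = b then lam * pP a else 0)"
        unfolding w'_def by (rule sum.distrib)
      also have "\<dots> = (1-lam) * pP a + lam * pP a" by (simp add: sum_distrib_left[symmetric] marg1)
      also have "\<dots> = pP a" by (simp add: algebra_simps)
      finally show ?thesis .
    qed
    have q'_eq: "(\<Sum>a\<in>UNIV. w' a b) = q' b" for b
    proof -
      have "(\<Sum>a\<in>UNIV. w' a b) = (\<Sum>a\<in>UNIV. (1-lam) * wW a b) + (\<Sum>a\<in>UNIV. if a = b then lam * pP a else 0)"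
        unfolding w'_def by (rule sum.distrib)
      also have "\<dots> = (1-lam) * qQ b + lam * pP b" by (simp add: sum_distrib_left[symmetric] marg2)
      finally show ?thesis unfolding q'_def .
    qed
    have q'_pos: "q' b > 0" for b
    proof -
      have "qQ b \<ge> 0" unfolding qQ_def by simp
      thus ?thesis unfolding q'_def using lam_pos lam_lt1 pP_pos[of b] by (simp add: add_nonneg_pos)
    qed
    define I' where "I' = (\<Sum>a\<in>UNIV. \<Sum>b\<in>UNIV. w' a b * ln (w' a b / (pP a * q' b)))"
    define E' where "E' = (\<Sum>a\<in>UNIV. \<Sum>b\<in>UNIV. w' a b * ln (M b))"
    have I'_le: "I' \<le> (1-lam) * IW + lam * Hp"
    proof -
      have "I' \<le> (\<Sum>a\<in>UNIV. \<Sum>b\<in>UNIV. (1-lam) * (wW a b * ln (wW a b / (pP a * qQ b))) +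
                    (if a = b then lam * pP a * ln (pP a / (pP a * pP b)) else 0))"
        unfolding I'_def w'_def q'_def
      proof (intro sum_mono mixing_term)
        fix a b
        show "wW a b \<ge> 0" by (rule wW_nn)
        show "pP a > 0" "pP b > 0" by (rule pP_pos)+
        show "qQ b \<ge> 0" unfolding qQ_def by simp
        show "wW a b > 0 \<Longrightarrow> qQ b > 0" using w_le_q[of a b] by simp
      qed (use lam_pos lam_lt1 in auto)
      also have "\<dots> = (1-lam) * IW + lam * Hp"
        unfolding IW_def Hp_def by (simp add: sum.distrib sum_distrib_left mult.assoc)
      finally show ?thesis .
    qed
    have E'_eq: "E' = (1-lam) * EQ + lam * EP"
    proof -
      have "E' = (\<Sum>b\<in>UNIV. (\<Sum>a\<in>UNIV. w' a b) * ln (M b))"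
        unfolding E'_def by (subst sum.swap) (simp add: sum_distrib_right)
      also have "\<dots> = (\<Sum>b\<in>UNIV. q' b * ln (M b))" by (simp add: q'_eq)
      also have "\<dots> = (\<Sum>b\<in>UNIV. (1-lam) * (qQ b * ln (M b)) + lam * (pP b * ln (M b)))"
        unfolding q'_def by (intro sum.cong) (simp_all add: algebra_simps)
      also have "\<dots> = (1-lam) * EQ + lam * EP"
        unfolding EQ_def EP_def by (simp add: sum.distrib sum_distrib_left)
      finally show ?thesis .
    qed
    have rate_ok: "I' + E' \<le> r + \<epsilon>/2"
    proof -
      have "I' + E' \<le> (1-lam) * IW + lam * Hp + ((1-lam) * EQ + lam * EP)" using I'_le E'_eq by simp
      also have "\<dots> = IW + EQ + lam * Z" unfolding Z_def by (simp add: algebra_simps)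
      finally show ?thesis using IWl lamZ by simp
    qed
    have q'_sum: "(\<Sum>b\<in>UNIV. q' b) = 1"
      using q'_eq w'_marg pP_sum by (simp add: sum.swap[of _ UNIV UNIV] flip: q'_eq)
    have I'_nn: "I' \<ge> 0"
    proof -
      have "(\<Sum>a\<in>UNIV. \<Sum>b\<in>UNIV. w' a b - pP a * q' b) \<le> I'"
        unfolding I'_def
      proof (intro sum_mono xlnx_ge)
        fix a b
        show "w' a b \<ge> 0" by (rule w'_nn)
        show "pP a * q' b \<ge> 0" using pP_pos[of a] q'_pos[of b] by simp
        show "pP a * q' b > 0" using pP_pos[of a] q'_pos[of b] by simp
      qed
      moreover have "(\<Sum>a\<in>UNIV. \<Sum>b\<in>UNIV. w' a b - pP a * q' b) = 0"
        by (simp add: sum_subtractf w'_marg sum_distrib_left[symmetric] q'_sum pP_sum)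
      ultimately show ?thesis by simp
    qed
    define \<delta> where "\<delta> = min (min 1 (\<epsilon>/12)) (if D > 0 then lam * D / 2 else 1)"
    have d_pos: "\<delta> > 0" unfolding \<delta>_def using eps lam_pos by auto
    have d_le1: "\<delta> \<le> 1" unfolding \<delta>_def by simp
    have d_eps: "6 * \<delta> \<le> \<epsilon>/2" unfolding \<delta>_def by simp
    have rho_cond: "(\<Sum>a\<in>UNIV. \<Sum>b\<in>UNIV. w' a b * \<rho> a b) + 2 * \<delta> \<le> D \<or> (\<forall>a b. w' a b > 0 \<longrightarrow> \<rho> a b = 0)"
    proof (cases "D > 0")
      case True
      have "(\<Sum>a\<in>UNIV. \<Sum>b\<in>UNIV. w' a b * \<rho> a b) = (1-lam) * (\<Sum>a\<in>UNIV. \<Sum>b\<in>UNIV. wW a b * \<rho> a b)"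
      proof -
        have "w' a b * \<rho> a b = (1-lam) * (wW a b * \<rho> a b)" for a b
          unfolding w'_def by (cases "a = b") (simp_all add: rho_diag algebra_simps)
        hence e: "\<And>a b. w' a b * \<rho> a b = (1-lam) * (wW a b * \<rho> a b)" .
        show ?thesis by (simp only: e sum_distrib_left)
      qed
      also have "\<dots> \<le> (1-lam) * D" using distW lam_lt1 by (intro mult_left_mono) auto
      finally have "(\<Sum>a\<in>UNIV. \<Sum>b\<in>UNIV. w' a b * \<rho> a b) \<le> (1-lam) * D" .
      moreover have "2 * \<delta> \<le> lam * D" unfolding \<delta>_def using True by simp
      ultimately show ?thesis by (simp add: algebra_simps)
    next
      case False
      hence D0: "D = 0" using D by simp
      have each: "wW a b * \<rho> a b = 0" for a b
      proof -
        have nn: "\<And>a b. wW a b * \<rho> a b \<ge> 0" using wW_nn rho_nonneg by simp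
        have s0: "(\<Sum>a\<in>UNIV. \<Sum>b\<in>UNIV. wW a b * \<rho> a b) = 0"
        proof -
          have "0 \<le> (\<Sum>a\<in>UNIV. \<Sum>b\<in>UNIV. wW a b * \<rho> a b)" by (intro sum_nonneg nn)
          thus ?thesis using distW D0 by linarith
        qed
        hence "(\<Sum>b\<in>UNIV. wW a b * \<rho> a b) = 0"
          using nn by (subst (asm) sum_nonneg_eq_0_iff) (auto intro!: sum_nonneg)
        thus ?thesis using nn by (subst (asm) sum_nonneg_eq_0_iff) auto
      qed
      have "\<forall>a b. w' a b > 0 \<longrightarrow> \<rho> a b = 0"
      proof (intro allI impI)
        fix a b assume pos: "w' a b > 0"
        show "\<rho> a b = 0"
        proof (cases "a = b")
          case True thus ?thesis by (simp add: rho_diag)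
        next
          case False
          hence "wW a b > 0" using pos lam_lt1 unfolding w'_def by (auto simp: zero_less_mult_iff)
          thus ?thesis using each[of a b] by simp
        qed
      qed
      thus ?thesis by simp
    qed
    interpret cd: coding P w' \<rho> M D \<delta>
    proof
      show "pmf P a > 0" for a by (rule P_pos)
      show "w' a b \<ge> 0" for a b by (rule w'_nn)
      show "(\<Sum>b\<in>UNIV. w' a b) = pmf P a" for a using w'_marg by (simp add: pP_def)
      show "(\<Sum>a\<in>UNIV. w' a b) > 0" for b using q'_eq q'_pos by simp
    qed (use M_pos rho_nonneg D rho_cond d_pos d_le1 in auto)
    have cdp: "cd.p = pP" by (rule ext) (simp add: cd.p_def pP_def)
    have cdq: "cd.q = q'" by (rule ext) (simp add: cd.q_def q'_eq)
    have G1: "cd.GG cd.g1 = I'" unfolding cd.GG_def cd.g1_def I'_def cdp cdq ..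
    have G3: "cd.GG cd.g3 = E'" unfolding cd.GG_def cd.g3_def E'_def ..
    obtain C where C1: "\<forall>n\<ge>1. C n \<subseteq> {xs. length xs = n}"
      and C2: "\<forall>n\<ge>1. Mn_set M (C n) > 0 \<longrightarrow> ln (Mn_set M (C n)) / real n \<le> cd.GG cd.g1 + cd.GG cd.g3 + \<epsilon>/2"
      and C3: "AE \<omega> in PiM UNIV (\<lambda>_::nat. measure_pmf P).
               eventually (\<lambda>n. \<exists>y\<in>C n. rho_n \<rho> (map \<omega> [0..<n]) y \<le> D) sequentially"
      using cd.coding_main[of "\<epsilon>/2"] G1 I'_nn d_eps by auto
    have "\<forall>n\<ge>1. Mn_set M (C n) > 0 \<longrightarrow> ereal (ln (Mn_set M (C n)) / real n) \<le> ?R + ereal \<epsilon>"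
    proof (intro allI impI)
      fix n :: nat assume "n \<ge> 1" "Mn_set M (C n) > 0"
      hence "ln (Mn_set M (C n)) / real n \<le> I' + E' + \<epsilon>/2" using C2 G1 G3 by simp
      also have "\<dots> \<le> r + \<epsilon>" using rate_ok by simp
      finally show "ereal (ln (Mn_set M (C n)) / real n) \<le> ?R + ereal \<epsilon>" using r by simp
    qed
    thus ?thesis using C1 C3 by blast
  qed
qed

end
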